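(* Let $G$ be a digraph with at least one arc, and let $d(G)$ and $d(LG)$ denote the inner diameters of $G$ and of its line digraph $LG$. Then $$d(G)-1\le d(LG)\le d(G)+1.$$
   Context: Digraphs are finite and may have loops and multiple arcs. $\mathrm{dist}_G(u,v)$ is the length of a shortest directed walk from $u$ to $v$ ($\infty$ if none; $\mathrm{dist}_G(u,u)=0$). The inner diameter of $G$ is $d(G)=\max\{\mathrm{dist}_G(u,v): u,v\in V(G),\ \mathrm{dist}_G(u,v)<\infty\}$. The line digraph $LG$ has as vertex set the set of arcs of $G$, with an arc from $e$ to $f$ whenever the head of $e$ equals the tail of $f$. *)

theory Defs
  imports "Graph_Theory.Graph_Theory" "HOL-Library.Extended_Nat"
begin

text \<open>Digraphs (with loops and multiple arcs allowed) are the records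
  of Graph_Theory (verts, arcs, tail, head), subject to fin_digraph.\<close>

text \<open>Distance: length of a shortest directed walk, infinity if none
  (the infimum over the empty set of enat is infinity).\<close>
definition walk_dist :: "('a,'b) pre_digraph \<Rightarrow> 'a \<Rightarrow> 'a \<Rightarrow> enat" where
  "walk_dist G u v = (INF p\<in>{p. pre_digraph.awalk G u p v}. enat (length p))"

definition inner_diameter :: "('a,'b) pre_digraph \<Rightarrow> nat" where
  "inner_diameter G = Max {the_enat (walk_dist G u v) | u v.
      u \<in> verts G \<and> v \<in> verts G \<and> walk_dist G u v < \<infinity>}"

definition line_digraph :: "('a,'b) pre_digraph \<Rightarrow> ('b, 'b \<times> 'b) pre_digraph" where
  "line_digraph G = \<lparr> verts = arcs G,
     arcs = {(e, f). e \<in> arcs G \<and> f \<in> arcs G \<and> head G e = tail G f},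
     tail = fst, head = snd \<rparr>"

end

theory Submission
  imports Defs
begin

lemma wd_le: "pre_digraph.awalk G u p v \<Longrightarrow> walk_dist G u v \<le> enat (length p)"
  unfolding walk_dist_def by (rule INF_lower) auto

lemma wd_attained:
  assumes "walk_dist G u v < \<infinity>"
  shows "\<exists>p. pre_digraph.awalk G u p v \<and> walk_dist G u v = enat (length p)"
proof -
  let ?S = "(\<lambda>p. enat (length p)) ` {p. pre_digraph.awalk G u p v}"
  have w: "walk_dist G u v = Inf ?S" unfolding walk_dist_def by simp
  have ne: "?S \<noteq> {}" using assms w unfolding Inf_enat_def by (auto split: if_split_asm)
  then have "Inf ?S = (LEAST x. x \<in> ?S)" by (subst Inf_enat_def) (simp only: ne if_False)
  moreover have "(LEAST x. x \<in> ?S) \<in> ?S" using ne by (metis LeastI ex_in_conv)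
  ultimately show ?thesis using w by auto
qed

lemma L_simps:
  "verts (line_digraph G) = arcs G"
  "arcs (line_digraph G) = {(e, f). e \<in> arcs G \<and> f \<in> arcs G \<and> head G e = tail G f}"
  "tail (line_digraph G) = fst" "head (line_digraph G) = snd"
  by (simp_all add: line_digraph_def)

lemma L_awalk_Nil: "pre_digraph.awalk (line_digraph G) e [] f \<longleftrightarrow> e = f \<and> e \<in> arcs G"
  by (auto simp: pre_digraph.awalk_def pre_digraph.cas.simps L_simps)

lemma L_awalk_Cons: "pre_digraph.awalk (line_digraph G) e (x # q) f \<longleftrightarrow>
   (\<exists>b. x = (e, b) \<and> e \<in> arcs G \<and> b \<in> arcs G \<and> head G e = tail G b
     \<and> pre_digraph.awalk (line_digraph G) b q f)"
  by (cases x) (auto simp: pre_digraph.awalk_def pre_digraph.cas.simps L_simps)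

lemma G_awalk_Nil: "pre_digraph.awalk G u [] v \<longleftrightarrow> u = v \<and> u \<in> verts G"
  by (auto simp: pre_digraph.awalk_def pre_digraph.cas.simps)

lemma G_awalk_Cons: "fin_digraph G \<Longrightarrow> pre_digraph.awalk G u (a # p) v \<longleftrightarrow>
   a \<in> arcs G \<and> u = tail G a \<and> pre_digraph.awalk G (head G a) p v"
  by (auto simp: pre_digraph.awalk_def pre_digraph.cas.simps fin_digraph_def wf_digraph_def)

lemma L_to_G:
  assumes "fin_digraph G" "pre_digraph.awalk (line_digraph G) e q f" "q \<noteq> []"
  shows "\<exists>p. pre_digraph.awalk G (head G e) p (tail G f) \<and> length p + 1 = length q"
  using assms(2,3)
proof (induction q arbitrary: e)
  case Nil then show ?case by simp
next
  case (Cons x q)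
  then obtain b where b: "x = (e, b)" "e \<in> arcs G" "b \<in> arcs G" "head G e = tail G b"
     "pre_digraph.awalk (line_digraph G) b q f" by (auto simp: L_awalk_Cons)
  show ?case
  proof (cases "q = []")
    case True
    then have "b = f" using b(5) by (simp add: L_awalk_Nil)
    moreover have "head G e \<in> verts G"
      using assms(1) b(2) by (simp add: fin_digraph_def wf_digraph_def)
    ultimately show ?thesis using b True by (auto simp: G_awalk_Nil)
  next
    case False
    with Cons.IH b(5) obtain p where "pre_digraph.awalk G (head G b) p (tail G f)"
      "length p + 1 = length q" by blast
    then show ?thesis using b by (intro exI[of _ "b # p"]) (auto simp: G_awalk_Cons[OF assms(1)])
  qed
qed

lemma G_to_L:
  assumes "fin_digraph G" "pre_digraph.awalk G u p v" "e \<in> arcs G" "f \<in> arcs G" "head G e = u" "tail G f = v"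
  shows "\<exists>q. pre_digraph.awalk (line_digraph G) e q f \<and> length q = length p + 1"
  using assms(2-)
proof (induction p arbitrary: e u)
  case Nil
  then show ?case
    by (intro exI[of _ "[(e, f)]"]) (auto simp: G_awalk_Nil L_awalk_Cons L_awalk_Nil L_simps)
next
  case (Cons a p)
  then have a: "a \<in> arcs G" "u = tail G a" "pre_digraph.awalk G (head G a) p v"
    using assms(1) by (auto simp: G_awalk_Cons[OF assms(1)])
  with Cons.IH[of "head G a" a] Cons.prems obtain q where
    "pre_digraph.awalk (line_digraph G) a q f" "length q = length p + 1" by auto
  then show ?case using a Cons.prems
    by (intro exI[of _ "(e, a) # q"]) (auto simp: L_awalk_Cons)
qed

lemma fin_pairs:
  assumes "finite (verts H)"
  shows "finite {the_enat (walk_dist H u v) | u v.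
      u \<in> verts H \<and> v \<in> verts H \<and> walk_dist H u v < \<infinity>}"
proof -
  have "{the_enat (walk_dist H u v) | u v.
      u \<in> verts H \<and> v \<in> verts H \<and> walk_dist H u v < \<infinity>}
      \<subseteq> (\<lambda>(u, v). the_enat (walk_dist H u v)) ` (verts H \<times> verts H)" by auto
  then show ?thesis using assms by (meson finite_SigmaI finite_imageI finite_subset)
qed

lemma diam_ge:
  assumes "finite (verts H)" "u \<in> verts H" "v \<in> verts H" "walk_dist H u v < \<infinity>"
  shows "the_enat (walk_dist H u v) \<le> inner_diameter H"
  unfolding inner_diameter_def using fin_pairs[OF assms(1)] assms(2-4)
  by (intro Max_ge) auto

lemma diam_le:
  assumes "finite (verts H)" "verts H \<noteq> {}"
    "\<And>u v. u \<in> verts H \<Longrightarrow> v \<in> verts H \<Longrightarrow> walk_dist H u v < \<infinity>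
        \<Longrightarrow> the_enat (walk_dist H u v) \<le> N"
  shows "inner_diameter H \<le> N"
proof -
  obtain w where w: "w \<in> verts H" using assms(2) by auto
  have "walk_dist H w w \<le> enat 0" using wd_le[of H w "[]" w] w
    by (simp add: G_awalk_Nil)
  then have "walk_dist H w w < \<infinity>" by (simp add: zero_enat_def[symmetric])
  then show ?thesis unfolding inner_diameter_def
    using fin_pairs[OF assms(1)] assms(3) w by (subst Max_le_iff) auto
qed

theorem proposition2p3:
  fixes G :: "('a,'b) pre_digraph"
  assumes "fin_digraph G"
    and "arcs G \<noteq> {}"
  shows "int (inner_diameter G) - 1 \<le> int (inner_diameter (line_digraph G))
       \<and> inner_diameter (line_digraph G) \<le> inner_diameter G + 1"
proof
  let ?L = "line_digraph G"
  have finV: "finite (verts G)" and finA: "finite (arcs G)"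
    using assms(1) by (auto simp: fin_digraph_def fin_digraph_axioms_def)
  have wf: "tail G a \<in> verts G" "head G a \<in> verts G" if "a \<in> arcs G" for a
    using assms(1) that by (auto simp: fin_digraph_def wf_digraph_def)
  have finL: "finite (verts ?L)" using finA by (simp add: L_simps)
  show "inner_diameter ?L \<le> inner_diameter G + 1"
  proof (rule diam_le[OF finL])
    show "verts ?L \<noteq> {}" using assms(2) by (simp add: L_simps)
    fix e f assume e: "e \<in> verts ?L" and f: "f \<in> verts ?L" and fin: "walk_dist ?L e f < \<infinity>"
    then have eA: "e \<in> arcs G" and fA: "f \<in> arcs G" by (auto simp: L_simps)
    obtain q where q: "pre_digraph.awalk ?L e q f" "walk_dist ?L e f = enat (length q)"
      using wd_attained[OF fin] by blast
    show "the_enat (walk_dist ?L e f) \<le> inner_diameter G + 1"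
    proof (cases "q = []")
      case True then show ?thesis using q by simp
    next
      case False
      obtain p where p: "pre_digraph.awalk G (head G e) p (tail G f)"
        using L_to_G[OF assms(1) q(1) False] by blast
      have fG: "walk_dist G (head G e) (tail G f) < \<infinity>"
        using le_less_trans[OF wd_le[OF p], of \<infinity>] by simp
      obtain p' where p': "pre_digraph.awalk G (head G e) p' (tail G f)"
        "walk_dist G (head G e) (tail G f) = enat (length p')"
        using wd_attained[OF fG] by blast
      obtain q' where q': "pre_digraph.awalk ?L e q' f" "length q' = length p' + 1"
        using G_to_L[OF assms(1) p'(1) eA fA refl refl] by blast
      have "length q \<le> length q'" using wd_le[OF q'(1)] q(2) by simp
      moreover have "length p' \<le> inner_diameter G"
        using diam_ge[OF finV wf(2)[OF eA] wf(1)[OF fA] fG] p'(2) by simp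
      ultimately show ?thesis using q(2) q'(2) by simp
    qed
  qed
next
  let ?L = "line_digraph G"
  have finV: "finite (verts G)" and finA: "finite (arcs G)"
    using assms(1) by (auto simp: fin_digraph_def fin_digraph_axioms_def)
  have wf: "tail G a \<in> verts G" "head G a \<in> verts G" if "a \<in> arcs G" for a
    using assms(1) that by (auto simp: fin_digraph_def wf_digraph_def)
  have finL: "finite (verts ?L)" using finA by (simp add: L_simps)
  obtain a0 where a0: "a0 \<in> arcs G" using assms(2) by auto
  have ne: "{the_enat (walk_dist G u v) | u v.
      u \<in> verts G \<and> v \<in> verts G \<and> walk_dist G u v < \<infinity>} \<noteq> {}"
  proof -
    have "walk_dist G (tail G a0) (tail G a0) \<le> enat 0"
      using wd_le[of G "tail G a0" "[]" "tail G a0"] wf(1)[OF a0]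
      by (simp add: G_awalk_Nil)
    then have "walk_dist G (tail G a0) (tail G a0) < \<infinity>" by (simp add: zero_enat_def[symmetric])
    then show ?thesis using wf(1)[OF a0] by blast
  qed
  obtain u v where uv: "u \<in> verts G" "v \<in> verts G" "walk_dist G u v < \<infinity>"
    "inner_diameter G = the_enat (walk_dist G u v)"
    using Max_in[OF fin_pairs[OF finV] ne] unfolding inner_diameter_def by auto
  obtain p where p: "pre_digraph.awalk G u p v" "walk_dist G u v = enat (length p)"
    using wd_attained[OF uv(3)] by blast
  have D: "inner_diameter G = length p" using uv(4) p(2) by simp
  show "int (inner_diameter G) - 1 \<le> int (inner_diameter ?L)"
  proof (cases "length p \<le> 1")
    case True then show ?thesis using D by simp
  next
    case False
    then obtain a r b where prb: "p = a # r @ [b]"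
      by (metis One_nat_def Suc_leI append_butlast_last_id length_Cons length_greater_0_conv
          list.size(3) not_less_eq_eq neq_Nil_conv tl_Nil less_one length_tl)
    have aA: "a \<in> arcs G" and ua: "u = tail G a" and rest: "pre_digraph.awalk G (head G a) (r @ [b]) v"
      using p(1) prb assms(1) by (auto simp: G_awalk_Cons[OF assms(1)])
    have r: "pre_digraph.awalk G (head G a) r (tail G b)" and bA: "b \<in> arcs G"
      and vb: "v = head G b"
      using rest by (auto simp: pre_digraph.awalk_def pre_digraph.cas_append_iff pre_digraph.cas.simps)
    obtain q0 where q0: "pre_digraph.awalk ?L a q0 b" "length q0 = length r + 1"
      using G_to_L[OF assms(1) r aA bA refl refl] by blast
    have finab: "walk_dist ?L a b < \<infinity>"
      using le_less_trans[OF wd_le[OF q0(1)], of \<infinity>] by simp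
    obtain q where q: "pre_digraph.awalk ?L a q b" "walk_dist ?L a b = enat (length q)"
      using wd_attained[OF finab] by blast
    have "length p \<le> length q + 1"
    proof (cases "q = []")
      case True
      then have "a = b" using q(1) by (simp add: L_awalk_Nil)
      then have "pre_digraph.awalk G u [a] v" using aA ua vb wf[OF aA]
        by (simp add: G_awalk_Cons[OF assms(1)] G_awalk_Nil)
      then have "length p \<le> 1" using wd_le p(2) by fastforce
      then show ?thesis by simp
    next
      case False
      obtain p' where p': "pre_digraph.awalk G (head G a) p' (tail G b)" "length p' + 1 = length q"
        using L_to_G[OF assms(1) q(1) False] by blast
      have wfG: "wf_digraph G" using assms(1) by (simp add: fin_digraph_def)
      have bw: "pre_digraph.awalk G (tail G b) [b] v"
        using bA vb wf[OF bA] by (simp add: G_awalk_Cons[OF assms(1)] G_awalk_Nil)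
      have "pre_digraph.awalk G (head G a) (p' @ [b]) v"
        by (rule wf_digraph.awalk_appendI[OF wfG p'(1) bw])
      then have "pre_digraph.awalk G u (a # p' @ [b]) v"
        using aA ua by (simp add: G_awalk_Cons[OF assms(1)])
      then have "length p \<le> length (a # p' @ [b])" using wd_le p(2) by fastforce
      then show ?thesis using p'(2) by simp
    qed
    moreover have "length q \<le> inner_diameter ?L"
      using diam_ge[OF finL _ _ finab] aA bA q(2) by (simp add: L_simps)
    ultimately show ?thesis using D by simp
  qed
qed

end
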